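(* Consider the two-layer system $$\dot{\mathbf{q}}=\mathbf{f}_0(\mathbf{q})+\mathbf{g}_0(\mathbf{q})\boldsymbol{\xi},\qquad \dot{\boldsymbol{\xi}}=\mathbf{f}_1(\mathbf{q},\boldsymbol{\xi})+\mathbf{g}_1(\mathbf{q},\boldsymbol{\xi})\mathbf{u},$$ with $\mathbf{q}\in\mathbb{R}^n$, $\boldsymbol{\xi}\in\mathbb{R}^p$, $\mathbf{u}\in\mathbb{R}^m$ and locally Lipschitz $\mathbf{f}_0,\mathbf{g}_0,\mathbf{f}_1,\mathbf{g}_1$. Let $h_0:\mathbb{R}^n\to\mathbb{R}$ be continuously differentiable, with $\mathcal{C}_0=\{\mathbf{q}:h_0(\mathbf{q})\ge0\}$. Suppose there exist a continuously differentiable $\mathbf{k}_0:\mathbb{R}^n\to\mathbb{R}^p$ and constants $\alpha,\varepsilon>0$ such that for all $\mathbf{q}\in\mathbb{R}^n$ $$L_{\mathbf{f}_0}h_0(\mathbf{q})+L_{\mathbf{g}_0}h_0(\mathbf{q})\mathbf{k}_0(\mathbf{q})\ge-\alpha h_0(\mathbf{q})+\tfrac{1}{\varepsilon}\|L_{\mathbf{g}_0}h_0(\mathbf{q})\|^2.$$ Suppose further there exist a tracking controller $\mathbf{k}:\mathbb{R}^n\times\mathbb{R}^p\to\mathbb{R}^m$, a continuously differentiable $V:\mathbb{R}^n\times\mathbb{R}^p\to\mathbb{R}_{\ge0}$ and constants $\gamma_1,\gamma_2,\gamma>0$ such that for all $(\mathbf{q},\boldsymbol{\xi})$: $\gamma_1\|\boldsymbol{\xi}-\mathbf{k}_0(\mathbf{q})\|^2\le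 V(\mathbf{q},\boldsymbol{\xi})\le\gamma_2\|\boldsymbol{\xi}-\mathbf{k}_0(\mathbf{q})\|^2$ and $\dot V(\mathbf{q},\boldsymbol{\xi})\le-\gamma V(\mathbf{q},\boldsymbol{\xi})$ along the closed-loop system with $\mathbf{u}=\mathbf{k}(\mathbf{q},\boldsymbol{\xi})$. Let $\mu>0$, $h(\mathbf{q},\boldsymbol{\xi})=h_0(\mathbf{q})-\frac{1}{\mu\gamma_1}V(\mathbf{q},\boldsymbol{\xi})$ and $\mathcal{C}=\{(\mathbf{q},\boldsymbol{\xi}):h(\mathbf{q},\boldsymbol{\xi})\ge0\}$. If $\gamma\ge\alpha+\frac{\varepsilon\mu}{4}$, then $\mathcal{C}$ is forward invariant for the closed-loop system with $\mathbf{u}=\mathbf{k}(\mathbf{q},\boldsymbol{\xi})$.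
   Context: $L_{\mathbf{f}_0}h_0(\mathbf{q})=\nabla h_0(\mathbf{q})\cdot\mathbf{f}_0(\mathbf{q})$, $L_{\mathbf{g}_0}h_0(\mathbf{q})=\nabla h_0(\mathbf{q})^\top\mathbf{g}_0(\mathbf{q})$; $\dot V$ denotes the derivative of $V$ along the closed-loop vector field. A set is forward invariant if every closed-loop trajectory starting in it remains in it on its maximal interval of existence. *)

theory Defs
  imports "HOL-Analysis.Analysis"
begin

definition loc_lipschitz :: "('a::metric_space \<Rightarrow> 'b::metric_space) \<Rightarrow> bool" where
  "loc_lipschitz f \<longleftrightarrow> (\<forall>x. \<exists>e>0. \<exists>L. L-lipschitz_on (ball x e) f)"

text \<open>Since the system is
  autonomous we start at time 0, and since every point of the forward part of a maximal
  interval lies in some compact interval [0,T] on which the maximal solution is a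
  solution, quantifying over all solutions on all intervals [0,T] is equivalent.\<close>
definition forward_invariant :: "('a::real_normed_vector \<Rightarrow> 'a) \<Rightarrow> 'a set \<Rightarrow> bool" where
  "forward_invariant F S \<longleftrightarrow>
     (\<forall>(x::real \<Rightarrow> 'a) T. (\<forall>t\<in>{0..T}. (x has_vector_derivative F (x t)) (at t within {0..T}))
        \<longrightarrow> x 0 \<in> S \<longrightarrow> (\<forall>t\<in>{0..T}. x t \<in> S))"

definition lie_f :: "(real^'n \<Rightarrow> real^'n) \<Rightarrow> (real^'n \<Rightarrow> real^'n) \<Rightarrow> real^'n \<Rightarrow> real" where
  "lie_f dh f q = dh q \<bullet> f q"

definition lie_g :: "(real^'n \<Rightarrow> real^'n) \<Rightarrow> (real^'n \<Rightarrow> real^'p^'n) \<Rightarrow> real^'n \<Rightarrow> real^'p" where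
  "lie_g dh g q = dh q v* g q"

end

theory Submission
  imports Defs
begin

theorem theorem12:
  fixes f0 :: "real^'n \<Rightarrow> real^'n"
    and g0 :: "real^'n \<Rightarrow> real^'p^'n"
    and f1 :: "(real^'n) \<times> (real^'p) \<Rightarrow> real^'p"
    and g1 :: "(real^'n) \<times> (real^'p) \<Rightarrow> real^'m^'p"
    and h0 :: "real^'n \<Rightarrow> real" and dh0 :: "real^'n \<Rightarrow> real^'n"
    and k0 :: "real^'n \<Rightarrow> real^'p" and Dk0 :: "real^'n \<Rightarrow> real^'n^'p"
    and k :: "(real^'n) \<times> (real^'p) \<Rightarrow> real^'m"
    and V :: "(real^'n) \<times> (real^'p) \<Rightarrow> real" and dV :: "(real^'n) \<times> (real^'p) \<Rightarrow> (real^'n) \<times> (real^'p)"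
    and \<alpha> \<epsilon> \<gamma>1 \<gamma>2 \<gamma> \<mu> :: real
  defines "F \<equiv> (\<lambda>(q, \<xi>). (f0 q + g0 q *v \<xi>, f1 (q, \<xi>) + g1 (q, \<xi>) *v k (q, \<xi>)))"
  assumes lip: "loc_lipschitz f0" "loc_lipschitz g0" "loc_lipschitz f1" "loc_lipschitz g1"
    and h0_C1: "\<And>q. (h0 has_derivative (\<lambda>v. dh0 q \<bullet> v)) (at q)" "continuous_on UNIV dh0"
    and k0_C1: "\<And>q. (k0 has_derivative (\<lambda>v. Dk0 q *v v)) (at q)" "continuous_on UNIV Dk0"
    and pos0: "\<alpha> > 0" "\<epsilon> > 0"
    and cbf0: "\<And>q. lie_f dh0 f0 q + lie_g dh0 g0 q \<bullet> k0 q
                   \<ge> - \<alpha> * h0 q + (1 / \<epsilon>) * (norm (lie_g dh0 g0 q))\<^sup>2"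
    and V_C1: "\<And>x. (V has_derivative (\<lambda>v. dV x \<bullet> v)) (at x)" "continuous_on UNIV dV"
    and V_nonneg: "\<And>x. V x \<ge> 0"
    and pos1: "\<gamma>1 > 0" "\<gamma>2 > 0" "\<gamma> > 0"
    and V_bounds: "\<And>q \<xi>. \<gamma>1 * (norm (\<xi> - k0 q))\<^sup>2 \<le> V (q, \<xi>)"
                  "\<And>q \<xi>. V (q, \<xi>) \<le> \<gamma>2 * (norm (\<xi> - k0 q))\<^sup>2"
    and V_decay: "\<And>x. dV x \<bullet> F x \<le> - \<gamma> * V x"
    and mu: "\<mu> > 0"
    and gain: "\<gamma> \<ge> \<alpha> + \<epsilon> * \<mu> / 4"
  shows "forward_invariant F {(q, \<xi>). h0 q - (1 / (\<mu> * \<gamma>1)) * V (q, \<xi>) \<ge> 0}"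
proof -
  define c where "c = 1 / (\<mu> * \<gamma>1)"
  have c_pos: "c > 0" using mu pos1 by (simp add: c_def)
  define H where "H = (\<lambda>y::(real^'n) \<times> (real^'p). h0 (fst y) - c * V y)"
  define H' where "H' = (\<lambda>y::(real^'n) \<times> (real^'p). dh0 (fst y) \<bullet> fst (F y) - c * (dV y \<bullet> F y))"
  have Hder: "(H has_derivative (\<lambda>v. dh0 (fst y) \<bullet> fst v - c * (dV y \<bullet> v))) (at y within S)" for y S
  proof -
    have 1: "((\<lambda>y. h0 (fst y)) has_derivative (\<lambda>v. dh0 (fst y) \<bullet> fst v)) (at y within S)"
      using has_derivative_compose[OF has_derivative_fst[OF has_derivative_ident] h0_C1(1)[of "fst y"]]
      by (simp add: o_def)
    have 2: "((\<lambda>y. c * V y) has_derivative (\<lambda>v. c * (dV y \<bullet> v))) (at y within S)"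
      using has_derivative_mult_right[OF has_derivative_at_withinI[OF V_C1(1)[of y]]] by simp
    show ?thesis unfolding H_def using has_derivative_diff[OF 1 2] .
  qed
  have Hineq: "H' y \<ge> - \<alpha> * H y" for y
  proof -
    obtain q \<xi> where y: "y = (q, \<xi>)" by (cases y)
    define a where "a = norm (lie_g dh0 g0 q)"
    define b where "b = norm (\<xi> - k0 q)"
    have Fy: "fst (F y) = f0 q + g0 q *v \<xi>" by (simp add: F_def y)
    have e1: "dh0 q \<bullet> (g0 q *v \<xi>) = lie_g dh0 g0 q \<bullet> k0 q + lie_g dh0 g0 q \<bullet> (\<xi> - k0 q)"
      by (simp add: lie_g_def dot_lmul_matrix inner_diff_right)
    have cs: "lie_g dh0 g0 q \<bullet> (\<xi> - k0 q) \<ge> - (a * b)"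
      unfolding a_def b_def using norm_cauchy_schwarz[of "- lie_g dh0 g0 q" "\<xi> - k0 q"] by simp
    have sq: "(1 / \<epsilon>) * a\<^sup>2 - a * b \<ge> - (\<epsilon> / 4) * b\<^sup>2"
    proof -
      have "0 \<le> (a - \<epsilon> * b / 2)\<^sup>2" by simp
      hence "0 \<le> a\<^sup>2 - \<epsilon> * (a * b) + \<epsilon>\<^sup>2 * b\<^sup>2 / 4" by (simp add: power2_eq_square algebra_simps)
      hence "0 \<le> (a\<^sup>2 - \<epsilon> * (a * b) + \<epsilon>\<^sup>2 * b\<^sup>2 / 4) / \<epsilon>" using pos0 by simp
      also have "\<dots> = (1 / \<epsilon>) * a\<^sup>2 - a * b + (\<epsilon> / 4) * b\<^sup>2"
        using pos0 by (simp add: field_simps power2_eq_square)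
      finally show ?thesis by simp
    qed
    have vb: "b\<^sup>2 \<le> V y / \<gamma>1" using V_bounds(1)[of \<xi> q] pos1 by (simp add: y b_def field_simps mult.commute)
    have "c * (dV y \<bullet> F y) \<le> c * (- \<gamma> * V y)"
      by (rule mult_left_mono[OF V_decay]) (use c_pos in simp)
    hence vd: "- c * (dV y \<bullet> F y) \<ge> c * \<gamma> * V y" by simp
    have "H' y \<ge> - \<alpha> * h0 q + (1 / \<epsilon>) * a\<^sup>2 - a * b + c * \<gamma> * V y"
      using cbf0[of q] e1 cs vd unfolding H'_def Fy a_def
      by (simp add: y lie_f_def inner_add_right)
    moreover have "(1 / \<epsilon>) * a\<^sup>2 - a * b \<ge> - (\<epsilon> / 4) * (V y / \<gamma>1)"
    proof -
      have "(\<epsilon> / 4) * b\<^sup>2 \<le> (\<epsilon> / 4) * (V y / \<gamma>1)"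
        by (rule mult_left_mono[OF vb]) (use pos0 in simp)
      thus ?thesis using sq by linarith
    qed
    moreover have "c * \<gamma> * V y - (\<epsilon> / 4) * (V y / \<gamma>1) \<ge> c * \<alpha> * V y"
    proof -
      have "c * \<gamma> * V y - (\<epsilon> / 4) * (V y / \<gamma>1) - c * \<alpha> * V y = c * V y * (\<gamma> - \<alpha> - \<epsilon> * \<mu> / 4)"
        using mu pos1 by (simp add: c_def field_simps)
      also have "\<dots> \<ge> 0" using c_pos V_nonneg[of y] gain by simp
      finally show ?thesis by simp
    qed
    ultimately show ?thesis unfolding H_def by (simp add: y algebra_simps)
  qed
  show ?thesis unfolding forward_invariant_def
  proof (intro allI impI ballI)
    fix x :: "real \<Rightarrow> (real^'n) \<times> (real^'p)" and T t
    assume der: "\<forall>t\<in>{0..T}. (x has_vector_derivative F (x t)) (at t within {0..T})"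
      and x0: "x 0 \<in> {(q, \<xi>). h0 q - 1 / (\<mu> * \<gamma>1) * V (q, \<xi>) \<ge> 0}"
      and t: "t \<in> {0..T}"
    define \<phi> where "\<phi> = (\<lambda>s. exp (\<alpha> * s) * H (x s))"
    have phider: "(\<phi> has_real_derivative exp (\<alpha> * s) * (\<alpha> * H (x s) + H' (x s))) (at s within {0..T})"
      if s: "s \<in> {0..T}" for s
    proof -
      have d1: "(x has_derivative (\<lambda>h. h *\<^sub>R F (x s))) (at s within {0..T})"
        using der s by (simp add: has_vector_derivative_def)
      have "((\<lambda>s. H (x s)) has_derivative (\<lambda>h. H' (x s) * h)) (at s within {0..T})"
        by (rule has_derivative_eq_rhs[OF has_derivative_compose[OF d1 Hder[of "x s" UNIV]]])
          (simp add: fun_eq_iff H'_def algebra_simps)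
      hence "((\<lambda>s. H (x s)) has_real_derivative H' (x s)) (at s within {0..T})"
        by (simp add: has_field_derivative_def o_def)
      moreover have "((\<lambda>s. exp (\<alpha> * s)) has_real_derivative exp (\<alpha> * s) * \<alpha>) (at s within {0..T})"
        by (auto intro!: derivative_eq_intros)
      ultimately show ?thesis unfolding \<phi>_def
        by (auto intro!: derivative_eq_intros simp: algebra_simps)
    qed
    have "\<phi> 0 \<le> \<phi> t"
    proof (rule DERIV_nonneg_imp_increasing_open[of 0 t \<phi>])
      show "0 \<le> t" using t by simp
      fix s assume s: "0 < s" "s < t"
      have "at s within {0..T} = at s" using s t by (intro at_within_Icc_at) auto
      moreover have "exp (\<alpha> * s) * (\<alpha> * H (x s) + H' (x s)) \<ge> 0"
        using Hineq[of "x s"] by simp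
      ultimately show "\<exists>y. (\<phi> has_real_derivative y) (at s) \<and> 0 \<le> y"
        using phider[of s] s t by auto
    next
      have "continuous_on {0..T} \<phi>"
        using phider by (meson DERIV_continuous continuous_on_eq_continuous_within)
      thus "continuous_on {0..t} \<phi>" by (rule continuous_on_subset) (use t in auto)
    qed
    moreover have "\<phi> 0 \<ge> 0" using x0 by (simp add: \<phi>_def H_def c_def case_prod_beta)
    ultimately have "exp (\<alpha> * t) * H (x t) \<ge> 0" unfolding \<phi>_def by simp
    hence "H (x t) \<ge> 0" by (simp add: zero_le_mult_iff)
    thus "x t \<in> {(q, \<xi>). h0 q - 1 / (\<mu> * \<gamma>1) * V (q, \<xi>) \<ge> 0}"
      by (simp add: H_def c_def case_prod_beta)
  qed
qed

end
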